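(* Let $E$ be a $k$-dimensional subspace of $\mathbb{C}^n$ with $k>1$, and let $W$ be a nonzero subspace of $E$. Then $W$ is special in $E$ if and only if $W = E\cap P(W)$.
   Context: A polydiagonal is a subspace of $\mathbb{C}^n$ of the form $\{x\in\mathbb{C}^n : x_i=x_j \text{ for all } (i,j)\in R\}$ for some (possibly empty) set $R$ of pairs of indices in $\{1,\dots,n\}$; i.e. a subspace defined by equalities of coordinates. The fully synchrony subspace is $F=\{x_1=x_2=\cdots=x_n\}$ (contained in every polydiagonal). For a subspace $W\subseteq\mathbb{C}^n$, $P(W)$ denotes the smallest polydiagonal containing $W$ (the intersection of all polydiagonals containing $W$). Given a subspace $E$ of $\mathbb{C}^n$, a subspace $W$ of $E$ is called special in $E$ if for every subspace $U$ of $E$ with $\dim U=\dim W$ and $P(U)\subseteq P(W)$ one has $P(U)=P(W)$. *)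

theory Defs
  imports "HOL-Analysis.Analysis"
begin

text \<open>Vectors of C^n are modelled as complex ^ 'n with 'n a finite index type (n = CARD('n)).
  Subspaces are complex-linear subspaces (vec.subspace, scalar multiplication (*s)).\<close>

definition polydiagonal :: "(complex ^ 'n) set \<Rightarrow> bool" where
  "polydiagonal D \<longleftrightarrow> (\<exists>R :: ('n \<times> 'n) set. D = {x. \<forall>(i, j) \<in> R. x $ i = x $ j})"

definition polyhull :: "(complex ^ 'n) set \<Rightarrow> (complex ^ 'n) set" where
  "polyhull W = \<Inter> {D. polydiagonal D \<and> W \<subseteq> D}"

definition special_in :: "(complex ^ 'n) set \<Rightarrow> (complex ^ 'n) set \<Rightarrow> bool" where
  "special_in E W \<longleftrightarrow>
     (\<forall>U. vec.subspace U \<and> U \<subseteq> E \<and> vec.dim U = vec.dim W \<and> polyhull U \<subseteq> polyhull W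
          \<longrightarrow> polyhull U = polyhull W)"

end

theory Submission
  imports Defs
begin

lemma polyhull_eq: "polyhull W = {x. \<forall>i j. (\<forall>w\<in>W. w$i = w$j) \<longrightarrow> x$i = x$j}"
proof
  let ?R = "{(i,j). \<forall>w\<in>W. w$i = w$j}"
  have "polydiagonal {x. \<forall>i j. (\<forall>w\<in>W. w$i = w$j) \<longrightarrow> x$i = x$j}"
    unfolding polydiagonal_def by (rule exI[of _ ?R]) auto
  moreover have "W \<subseteq> {x. \<forall>i j. (\<forall>w\<in>W. w$i = w$j) \<longrightarrow> x$i = x$j}" by auto
  ultimately show "polyhull W \<subseteq> {x. \<forall>i j. (\<forall>w\<in>W. w$i = w$j) \<longrightarrow> x$i = x$j}"
    unfolding polyhull_def by blast
next
  show "{x. \<forall>i j. (\<forall>w\<in>W. w$i = w$j) \<longrightarrow> x$i = x$j} \<subseteq> polyhull W"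
    unfolding polyhull_def polydiagonal_def by blast
qed

lemma polyhull_sub: "W \<subseteq> polyhull W"
  by (auto simp: polyhull_eq)

lemma polyhull_mono: "A \<subseteq> B \<Longrightarrow> polyhull A \<subseteq> polyhull B"
  unfolding polyhull_eq by blast

lemma polyhull_idem: "polyhull (polyhull W) \<subseteq> polyhull W"
  by (auto simp: polyhull_eq)

lemma polyhull_subspace: "vec.subspace (polyhull W)"
  unfolding vec.subspace_def polyhull_eq
proof (intro conjI ballI allI)
  fix x y :: "complex ^ 'a" assume "x \<in> {x. \<forall>i j. (\<forall>w\<in>W. w $ i = w $ j) \<longrightarrow> x $ i = x $ j}"
    "y \<in> {x. \<forall>i j. (\<forall>w\<in>W. w $ i = w $ j) \<longrightarrow> x $ i = x $ j}"
  thus "x + y \<in> {x. \<forall>i j. (\<forall>w\<in>W. w $ i = w $ j) \<longrightarrow> x $ i = x $ j}" by simp metis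
qed auto

theorem mainTheorem1:
  fixes E W :: "(complex ^ 'n) set"
  assumes "vec.subspace E" and "vec.dim E > 1"
    and "vec.subspace W" and "W \<subseteq> E" and "W \<noteq> {0}"
  shows "special_in E W \<longleftrightarrow> W = E \<inter> polyhull W"
proof
  assume sp: "special_in E W"
  define V where "V = E \<inter> polyhull W"
  have Vs: "vec.subspace V" unfolding V_def
    using assms(1) polyhull_subspace vec.subspace_inter by blast
  have WV: "W \<subseteq> V" unfolding V_def using assms(4) polyhull_sub by blast
  show "W = E \<inter> polyhull W"
  proof (rule ccontr)
    assume ne: "W \<noteq> E \<inter> polyhull W"
    then obtain v where v: "v \<in> V" "v \<notin> W" using WV V_def by blast
    obtain w where w: "w \<in> W" "w \<noteq> 0" using assms(5) vec.subspace_0[OF assms(3)] by blast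
    have "\<exists>u\<in>V. \<exists>i j. u$i \<noteq> u$j"
    proof (rule ccontr)
      assume "\<not> ?thesis"
      hence cst: "\<And>u i j. u \<in> V \<Longrightarrow> u$i = u$j" by blast
      obtain k where k: "w$k \<noteq> 0" using w(2) by (metis vec_eq_iff zero_index)
      have "v = (v$k / w$k) *s w"
      proof (subst vec_eq_iff, intro allI)
        fix i
        have "v$i = v$k" "w$i = w$k" using cst[OF v(1)] cst WV w(1) by blast+
        thus "v$i = ((v$k / w$k) *s w)$i" using k by simp
      qed
      hence "v \<in> W" using vec.subspace_scale[OF assms(3) w(1)] by metis
      thus False using v by blast
    qed
    then obtain u i j where u: "u \<in> V" "u$i \<noteq> u$j" by blast
    define K where "K = {x\<in>V. x$i = x$j}"
    have Ks: "vec.subspace K" unfolding K_def vec.subspace_def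
      using vec.subspace_0[OF Vs] vec.subspace_add[OF Vs] vec.subspace_scale[OF Vs] by auto
    have KV: "K \<subseteq> V" unfolding K_def by auto
    have "V \<subseteq> vec.span (insert u K)"
    proof
      fix x assume x: "x \<in> V"
      define t where "t = (x$i - x$j) / (u$i - u$j)"
      have "x - t *s u \<in> K" unfolding K_def
        using vec.subspace_diff[OF Vs x vec.subspace_scale[OF Vs u(1)]] u(2)
        by (auto simp: t_def field_simps)
      hence "x - t *s u + t *s u \<in> vec.span (insert u K)"
        by (intro vec.span_add vec.span_scale vec.span_base) auto
      thus "x \<in> vec.span (insert u K)" by simp
    qed
    hence "vec.dim V \<le> vec.dim (insert u K)" by (rule vec.dim_mono)
    also have "\<dots> \<le> vec.dim K + 1" by (simp add: vec.dim_insert)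
    finally have dVK: "vec.dim V \<le> vec.dim K + 1" .
    have "vec.dim W < vec.dim V"
    proof (rule ccontr)
      assume "\<not> ?thesis"
      hence "W = V" using vec.subspace_dim_equal[OF assms(3) Vs WV] by simp
      thus False using ne V_def by simp
    qed
    hence dWK: "vec.dim W \<le> vec.dim K" using dVK by simp
    obtain B where B: "B \<subseteq> K" "vec.independent B" "K \<subseteq> vec.span B" "card B = vec.dim K"
      using vec.basis_exists by blast
    obtain C where C: "C \<subseteq> B" "card C = vec.dim W" "finite C"
      using obtain_subset_with_card_n[of "vec.dim W" B] dWK B(4) by metis
    define U where "U = vec.span C"
    have Us: "vec.subspace U" unfolding U_def by simp
    have UK: "U \<subseteq> K" unfolding U_def using C(1) B(1) Ks vec.span_minimal by blast
    have dU: "vec.dim U = vec.dim W" unfolding U_def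
      using vec.dim_span_eq_card_independent[OF vec.independent_mono[OF B(2) C(1)]] C(2) by simp
    have "polyhull U \<subseteq> polyhull (polyhull W)"
      using UK KV V_def polyhull_mono by blast
    hence PU: "polyhull U \<subseteq> polyhull W" using polyhull_idem by blast
    have "U \<subseteq> E" using UK KV V_def by blast
    hence eq: "polyhull U = polyhull W" using sp Us dU PU unfolding special_in_def by blast
    have "u \<in> polyhull W" using u(1) V_def by blast
    hence "u \<in> polyhull U" using eq by simp
    moreover have "\<forall>y\<in>U. y$i = y$j" using UK K_def by blast
    ultimately have "u$i = u$j" unfolding polyhull_eq by blast
    thus False using u(2) by simp
  qed
next
  assume eq: "W = E \<inter> polyhull W"
  show "special_in E W" unfolding special_in_def
  proof (intro allI impI)
    fix U assume H: "vec.subspace U \<and> U \<subseteq> E \<and> vec.dim U = vec.dim W \<and> polyhull U \<subseteq> polyhull W"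
    have "U \<subseteq> W" using H polyhull_sub eq by blast
    hence "U = W" using vec.subspace_dim_equal[of U W] H assms(3) by simp
    thus "polyhull U = polyhull W" by simp
  qed
qed

end
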